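(* With notation as in the context, let $N$ be a $\Gamma$-module and consider the map $\circ\pi\colon\mathcal{H}om_\Gamma(\mathcal{P}_{\le n},N)\to\mathcal{H}om_\Gamma(\mathcal{P},N)$. Use the identifications $\mathrm{H}^i(\mathcal{H}om_\Gamma(\mathcal{P},N))\cong\mathrm{Ext}^i_\Gamma(M,N)$ and, since $\mathcal{P}_{\le n}[-n]=\mathcal{P}$, $\mathrm{H}^{i+n}(\mathcal{H}om_\Gamma(\mathcal{P}_{\le n},N))\cong\mathrm{Ext}^i_\Gamma(M,N)$. Then: (1) The map $\mathrm{Hom}_\Gamma(M,N)\to\mathrm{Ext}^n_\Gamma(M,N)$ induced by $\mathrm{H}^n(\circ\pi)$ is surjective, and its kernel is $\operatorname{Im}(\circ d_0)$, where $\mathrm{Hom}_\Gamma(M,N)$ is identified with $\ker(\circ d_1\colon\mathrm{Hom}_\Gamma(P_0,N)\to\mathrm{Hom}_\Gamma(P_1,N))\subseteq \mathrm{Hom}_\Gamma(P_0,N)$ and $\circ d_0\colon\mathrm{Hom}_\Gamma(P_{n-1},N)\to\mathrm{Hom}_\Gamma(P_0,N)$ is precomposition with $d_0$. (2) For every $i>0$, the map $\mathrm{Ext}^i_\Gamma(M,N)\to\mathrm{Ext}^{i+n}_\Gamma(M,N)$ induced by $\mathrm{H}^{i+n}(\circ\pi)$ is an isomorphism.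
   Context: $k$ is a field, $\Gamma$ a $k$-algebra (right modules), $M$ a $\Gamma$-module, $n\ge1$. Given a complex of finitely generated projectives $\mathrm{P}=(0\to P_{n-1}\xrightarrow{d_{n-1}}\cdots\xrightarrow{d_1}P_0\to0)$, $P_i$ in degree $-i$, and $\alpha\colon P_0\to M$, $\beta\colon M\to P_{n-1}$ with $0\to M\xrightarrow{\beta}P_{n-1}\to\cdots\to P_0\xrightarrow{\alpha}M\to0$ exact; $d_0=\beta\circ\alpha$. $\mathcal{P}$ is the projective resolution of $M$ with a copy of $P_i$ (the $\ell$-th copy) in degree $-(\ell n+i)$ for $\ell\ge0$, $0\le i\le n-1$, differential $(-1)^{\ell n}d_i$ from the $\ell$-th copy of $P_i$ to the $\ell$-th copy of $P_{i-1}$ ($i\ge1$) and $(-1)^{\ell n}d_0$ from the $(\ell+1)$-th copy of $P_0$ to the $\ell$-th copy of $P_{n-1}$. $\mathcal{P}_{\le n}$ is the brutal truncation of $\mathcal{P}$ consisting of all copies with $\ell\ge1$ (same degrees and differentials), and $\pi\colon\mathcal{P}\to\mathcal{P}_{\le n}$ is the projection, with kernel the $0$-th copy. $\mathcal{H}om_\Gamma(-,N)$ denotes the Hom complex, graded so that $\mathrm{H}^i(\mathcal{H}om_\Gamma(\mathcal{P},N))\cong\mathrm{Ext}^i_\Gamma(M,N)$; $[1]$ shifts to the left with a sign on the differential. *)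

theory Defs
  imports "HOL-Algebra.Algebra"
begin

text \<open>A right module over the ring R: an abelian group (additive part of the record)
  with a right action ract x r (read: x r).  The multiplicative fields of the
  underlying ring record are unused.\<close>

record ('g, 'a) rmodule = "'a ring" +
  ract :: "'a \<Rightarrow> 'g \<Rightarrow> 'a"

definition right_module :: "'g ring \<Rightarrow> ('g, 'a) rmodule \<Rightarrow> bool" where
  "right_module R M \<longleftrightarrow> ring R \<and> abelian_group M \<and>
     (\<forall>x\<in>carrier M. \<forall>r\<in>carrier R. ract M x r \<in> carrier M) \<and>
     (\<forall>x\<in>carrier M. \<forall>y\<in>carrier M. \<forall>r\<in>carrier R.
        ract M (x \<oplus>\<^bsub>M\<^esub> y) r = ract M x r \<oplus>\<^bsub>M\<^esub> ract M y r) \<and>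
     (\<forall>x\<in>carrier M. \<forall>r\<in>carrier R. \<forall>s\<in>carrier R.
        ract M x (r \<oplus>\<^bsub>R\<^esub> s) = ract M x r \<oplus>\<^bsub>M\<^esub> ract M x s) \<and>
     (\<forall>x\<in>carrier M. \<forall>r\<in>carrier R. \<forall>s\<in>carrier R.
        ract M x (r \<otimes>\<^bsub>R\<^esub> s) = ract M (ract M x r) s) \<and>
     (\<forall>x\<in>carrier M. ract M x \<one>\<^bsub>R\<^esub> = x)"

definition k_algebra :: "'k ring \<Rightarrow> 'g ring \<Rightarrow> ('k \<Rightarrow> 'g) \<Rightarrow> bool" where
  "k_algebra K R \<phi> \<longleftrightarrow> field K \<and> ring R \<and> \<phi> \<in> ring_hom K R \<and>
     (\<forall>a\<in>carrier K. \<forall>r\<in>carrier R. \<phi> a \<otimes>\<^bsub>R\<^esub> r = r \<otimes>\<^bsub>R\<^esub> \<phi> a)"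

definition rmod_hom :: "'g ring \<Rightarrow> ('g, 'a) rmodule \<Rightarrow> ('g, 'b) rmodule \<Rightarrow> ('a \<Rightarrow> 'b) set" where
  "rmod_hom R A B = {f. f \<in> carrier A \<rightarrow>\<^sub>E carrier B \<and>
     (\<forall>x\<in>carrier A. \<forall>y\<in>carrier A. f (x \<oplus>\<^bsub>A\<^esub> y) = f x \<oplus>\<^bsub>B\<^esub> f y) \<and>
     (\<forall>x\<in>carrier A. \<forall>r\<in>carrier R. f (ract A x r) = ract B (f x) r)}"

definition free_rmod :: "'g ring \<Rightarrow> nat \<Rightarrow> ('g, nat \<Rightarrow> 'g) rmodule" where
  "free_rmod R m = \<lparr>carrier = {..<m} \<rightarrow>\<^sub>E carrier R,
     monoid.mult = (\<lambda>v w. undefined), one = undefined,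
     ring.zero = (\<lambda>i\<in>{..<m}. \<zero>\<^bsub>R\<^esub>),
     ring.add = (\<lambda>v w. \<lambda>i\<in>{..<m}. v i \<oplus>\<^bsub>R\<^esub> w i),
     ract = (\<lambda>v r. \<lambda>i\<in>{..<m}. v i \<otimes>\<^bsub>R\<^esub> r)\<rparr>"

definition fg_projective :: "'g ring \<Rightarrow> ('g, 'a) rmodule \<Rightarrow> bool" where
  "fg_projective R P \<longleftrightarrow> (\<exists>m. \<exists>s\<in>rmod_hom R P (free_rmod R m).
      \<exists>p\<in>rmod_hom R (free_rmod R m) P. \<forall>x\<in>carrier P. p (s x) = x)"

text \<open>The additive group Hom_R(A,N), written as a (multiplicative-notation) monoid record.\<close>

definition homgrp :: "'g ring \<Rightarrow> ('g, 'a) rmodule \<Rightarrow> ('g, 'b) rmodule \<Rightarrow> ('a \<Rightarrow> 'b) monoid" where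
  "homgrp R A N = \<lparr>carrier = rmod_hom R A N,
     monoid.mult = (\<lambda>f g. \<lambda>x\<in>carrier A. f x \<oplus>\<^bsub>N\<^esub> g x),
     one = (\<lambda>x\<in>carrier A. \<zero>\<^bsub>N\<^esub>)\<rparr>"

text \<open>A cochain complex concentrated in degrees j >= 0: groups C j and
  differentials delta j : C j -> C (j+1).\<close>

definition cocyc :: "(nat \<Rightarrow> 'a monoid) \<Rightarrow> (nat \<Rightarrow> 'a \<Rightarrow> 'a) \<Rightarrow> nat \<Rightarrow> 'a set" where
  "cocyc C \<delta> j = {f \<in> carrier (C j). \<delta> j f = \<one>\<^bsub>C (Suc j)\<^esub>}"

definition cobd :: "(nat \<Rightarrow> 'a monoid) \<Rightarrow> (nat \<Rightarrow> 'a \<Rightarrow> 'a) \<Rightarrow> nat \<Rightarrow> 'a set" where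
  "cobd C \<delta> j = (if j = 0 then {\<one>\<^bsub>C 0\<^esub>} else \<delta> (j - 1) ` carrier (C (j - 1)))"

definition coh :: "(nat \<Rightarrow> 'a monoid) \<Rightarrow> (nat \<Rightarrow> 'a \<Rightarrow> 'a) \<Rightarrow> nat \<Rightarrow> 'a set monoid" where
  "coh C \<delta> j = ((C j)\<lparr>carrier := cocyc C \<delta> j\<rparr>) Mod (cobd C \<delta> j)"

definition Hmap :: "(nat \<Rightarrow> 'a monoid) \<Rightarrow> (nat \<Rightarrow> 'a \<Rightarrow> 'a) \<Rightarrow> (nat \<Rightarrow> 'a monoid) \<Rightarrow>
    (nat \<Rightarrow> 'a \<Rightarrow> 'a) \<Rightarrow> (nat \<Rightarrow> 'a \<Rightarrow> 'a) \<Rightarrow> nat \<Rightarrow> 'a set \<Rightarrow> 'a set" where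
  "Hmap C \<delta> C' \<delta>' \<phi> j = (\<lambda>Xc\<in>carrier (coh C \<delta> j).
      r_coset (C' j) (cobd C' \<delta>' j) (\<phi> j (SOME x. x \<in> Xc)))"

definition d0fun :: "(nat \<Rightarrow> ('g, 'p) rmodule) \<Rightarrow> ('p \<Rightarrow> 'm) \<Rightarrow> ('m \<Rightarrow> 'p) \<Rightarrow> 'p \<Rightarrow> 'p" where
  "d0fun P \<alpha> \<beta> = (\<lambda>x\<in>carrier (P 0). \<beta> (\<alpha> x))"

definition sgn_neg :: "('g, 'p) rmodule \<Rightarrow> nat \<Rightarrow> 'p \<Rightarrow> 'p" where
  "sgn_neg B e y = (if even e then y else \<ominus>\<^bsub>B\<^esub> y)"

text \<open>Differential of the resolution from degree -(j+1) to degree -j.  Writing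
  j+1 = l n + i with 0 <= i < n: the object in degree -(j+1) is the l-th copy of P_i.
  If i >= 1 the differential is (-1)^(l n) d_i; if i = 0 (then l >= 1) it is
  (-1)^((l-1) n) d_0 from the l-th copy of P_0 to the (l-1)-th copy of P_{n-1}.\<close>

definition dP :: "nat \<Rightarrow> (nat \<Rightarrow> ('g, 'p) rmodule) \<Rightarrow> (nat \<Rightarrow> 'p \<Rightarrow> 'p) \<Rightarrow> ('p \<Rightarrow> 'p) \<Rightarrow> nat \<Rightarrow> 'p \<Rightarrow> 'p" where
  "dP n P d d0 j = (let l = Suc j div n; i = Suc j mod n in
     if i \<noteq> 0 then (\<lambda>x\<in>carrier (P i). sgn_neg (P (i - 1)) (l * n) (d i x))
     else (\<lambda>x\<in>carrier (P 0). sgn_neg (P (n - 1)) ((l - 1) * n) (d0 x)))"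

definition HomPc :: "'g ring \<Rightarrow> ('g, 'b) rmodule \<Rightarrow> nat \<Rightarrow> (nat \<Rightarrow> ('g, 'p) rmodule) \<Rightarrow>
    nat \<Rightarrow> ('p \<Rightarrow> 'b) monoid" where
  "HomPc R N n P j = homgrp R (P (j mod n)) N"

definition delPc :: "nat \<Rightarrow> (nat \<Rightarrow> ('g, 'p) rmodule) \<Rightarrow> (nat \<Rightarrow> 'p \<Rightarrow> 'p) \<Rightarrow> ('p \<Rightarrow> 'p) \<Rightarrow>
    nat \<Rightarrow> ('p \<Rightarrow> 'b) \<Rightarrow> ('p \<Rightarrow> 'b)" where
  "delPc n P d d0 j f = (\<lambda>x\<in>carrier (P (Suc j mod n)). f (dP n P d d0 j x))"

text \<open>The Hom complex Hom(\<P>_{<=n}, N): equal to Hom(\<P>,N) in degrees >= n and zero below.\<close>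

definition HomQc :: "'g ring \<Rightarrow> ('g, 'b) rmodule \<Rightarrow> nat \<Rightarrow> (nat \<Rightarrow> ('g, 'p) rmodule) \<Rightarrow>
    nat \<Rightarrow> ('p \<Rightarrow> 'b) monoid" where
  "HomQc R N n P j = (if n \<le> j then HomPc R N n P j
     else \<lparr>carrier = {\<one>\<^bsub>HomPc R N n P j\<^esub>}, monoid.mult = monoid.mult (HomPc R N n P j),
           one = \<one>\<^bsub>HomPc R N n P j\<^esub>\<rparr>)"

definition delQc :: "'g ring \<Rightarrow> ('g, 'b) rmodule \<Rightarrow> nat \<Rightarrow> (nat \<Rightarrow> ('g, 'p) rmodule) \<Rightarrow>
    (nat \<Rightarrow> 'p \<Rightarrow> 'p) \<Rightarrow> ('p \<Rightarrow> 'p) \<Rightarrow> nat \<Rightarrow> ('p \<Rightarrow> 'b) \<Rightarrow> ('p \<Rightarrow> 'b)" where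
  "delQc R N n P d d0 j = (if n \<le> j then delPc n P d d0 j
     else (\<lambda>f. \<one>\<^bsub>HomPc R N n P (Suc j)\<^esub>))"

text \<open>The cochain map (precomposition with pi): identity in degrees >= n, zero below.\<close>

definition piQ :: "'g ring \<Rightarrow> ('g, 'b) rmodule \<Rightarrow> nat \<Rightarrow> (nat \<Rightarrow> ('g, 'p) rmodule) \<Rightarrow>
    nat \<Rightarrow> ('p \<Rightarrow> 'b) \<Rightarrow> ('p \<Rightarrow> 'b)" where
  "piQ R N n P j f = (if n \<le> j then f else \<one>\<^bsub>HomPc R N n P j\<^esub>)"

end

theory Submission
  imports Defs
begin

lemma rm_ag: "right_module R A \<Longrightarrow> abelian_group A"
  by (simp add: right_module_def)

lemma rm_add_closed:
  "right_module R A \<Longrightarrow> x \<in> carrier A \<Longrightarrow> y \<in> carrier A \<Longrightarrow> x \<oplus>\<^bsub>A\<^esub> y \<in> carrier A"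
proof -
  assume "right_module R A" "x \<in> carrier A" "y \<in> carrier A"
  then interpret abelian_group A by (simp add: right_module_def)
  show ?thesis using \<open>x \<in> carrier A\<close> \<open>y \<in> carrier A\<close> by simp
qed

lemma rm_ract_closed:
  "right_module R A \<Longrightarrow> x \<in> carrier A \<Longrightarrow> r \<in> carrier R \<Longrightarrow> ract A x r \<in> carrier A"
  unfolding right_module_def by blast

lemma addhom_zero:
  assumes "abelian_group A" "abelian_group B" "f \<in> carrier A \<rightarrow> carrier B"
    "\<forall>x\<in>carrier A. \<forall>y\<in>carrier A. f (x \<oplus>\<^bsub>A\<^esub> y) = f x \<oplus>\<^bsub>B\<^esub> f y"
  shows "f \<zero>\<^bsub>A\<^esub> = \<zero>\<^bsub>B\<^esub>"
proof -
  interpret A: abelian_group A by fact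
  interpret B: abelian_group B by fact
  have z: "f \<zero>\<^bsub>A\<^esub> \<in> carrier B" using assms(3) by auto
  have "f \<zero>\<^bsub>A\<^esub> \<oplus>\<^bsub>B\<^esub> f \<zero>\<^bsub>A\<^esub> = f \<zero>\<^bsub>A\<^esub> \<oplus>\<^bsub>B\<^esub> \<zero>\<^bsub>B\<^esub>"
    using assms(4) z by (metis A.l_zero A.zero_closed B.r_zero)
  then show ?thesis using z B.add.l_cancel B.zero_closed by blast
qed

lemma addhom_neg:
  assumes "abelian_group A" "abelian_group B" "f \<in> carrier A \<rightarrow> carrier B"
    "\<forall>x\<in>carrier A. \<forall>y\<in>carrier A. f (x \<oplus>\<^bsub>A\<^esub> y) = f x \<oplus>\<^bsub>B\<^esub> f y"
    "x \<in> carrier A"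
  shows "f (\<ominus>\<^bsub>A\<^esub> x) = \<ominus>\<^bsub>B\<^esub> f x"
proof -
  interpret A: abelian_group A by fact
  interpret B: abelian_group B by fact
  have "f (\<ominus>\<^bsub>A\<^esub> x) \<oplus>\<^bsub>B\<^esub> f x = \<zero>\<^bsub>B\<^esub>"
    using assms addhom_zero[OF assms(1-4)] by (metis A.a_inv_closed A.l_neg)
  then show ?thesis using assms(3,5) by (metis A.a_inv_closed B.minus_equality funcset_mem)
qed

lemma rmod_hom_add:
  assumes "f \<in> rmod_hom R A B" "x \<in> carrier A" "y \<in> carrier A"
  shows "f (x \<oplus>\<^bsub>A\<^esub> y) = f x \<oplus>\<^bsub>B\<^esub> f y"
  using assms by (simp add: rmod_hom_def)

lemma rmod_hom_ract:
  assumes "f \<in> rmod_hom R A B" "x \<in> carrier A" "r \<in> carrier R"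
  shows "f (ract A x r) = ract B (f x) r"
  using assms by (simp add: rmod_hom_def)

lemma rmod_hom_carrier:
  assumes "f \<in> rmod_hom R A B" "x \<in> carrier A"
  shows "f x \<in> carrier B"
  using assms by (auto simp add: rmod_hom_def)

lemma rmod_hom_ext:
  assumes "f \<in> rmod_hom R A B" "x \<notin> carrier A"
  shows "f x = undefined"
  using assms by (auto simp add: rmod_hom_def)

lemma rmod_hom_zero:
  assumes "right_module R A" "right_module R B" "f \<in> rmod_hom R A B"
  shows "f \<zero>\<^bsub>A\<^esub> = \<zero>\<^bsub>B\<^esub>"
  by (rule addhom_zero) (use assms in \<open>auto simp: right_module_def rmod_hom_def\<close>)

lemma rmod_hom_neg:
  assumes "right_module R A" "right_module R B" "f \<in> rmod_hom R A B" "x \<in> carrier A"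
  shows "f (\<ominus>\<^bsub>A\<^esub> x) = \<ominus>\<^bsub>B\<^esub> f x"
  by (rule addhom_neg) (use assms in \<open>auto simp: right_module_def rmod_hom_def\<close>)

lemma ract_zero:
  assumes "right_module R A" "r \<in> carrier R"
  shows "ract A \<zero>\<^bsub>A\<^esub> r = \<zero>\<^bsub>A\<^esub>"
proof -
  interpret A: abelian_group A using assms by (simp add: right_module_def)
  have "(\<lambda>x\<in>carrier A. ract A x r) \<zero>\<^bsub>A\<^esub> = \<zero>\<^bsub>A\<^esub>"
    by (rule addhom_zero) (use assms in \<open>auto simp: right_module_def\<close>)
  then show ?thesis by simp
qed

lemma ract_neg:
  assumes "right_module R A" "r \<in> carrier R" "x \<in> carrier A"
  shows "ract A (\<ominus>\<^bsub>A\<^esub> x) r = \<ominus>\<^bsub>A\<^esub> ract A x r"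
proof -
  interpret A: abelian_group A using assms by (simp add: right_module_def)
  have "(\<lambda>x\<in>carrier A. ract A x r) (\<ominus>\<^bsub>A\<^esub> x) = \<ominus>\<^bsub>A\<^esub> (\<lambda>x\<in>carrier A. ract A x r) x"
    by (rule addhom_neg) (use assms in \<open>auto simp: right_module_def\<close>)
  then show ?thesis using assms(3) by simp
qed

lemma rmod_hom_comp:
  assumes "right_module R A" "g \<in> rmod_hom R A B" "h \<in> rmod_hom R B C"
  shows "(\<lambda>x\<in>carrier A. h (g x)) \<in> rmod_hom R A C"
proof -
  have ca: "x \<in> carrier A \<Longrightarrow> y \<in> carrier A \<Longrightarrow> x \<oplus>\<^bsub>A\<^esub> y \<in> carrier A" for x y
    by (rule rm_add_closed[OF assms(1)])
  have cr: "x \<in> carrier A \<Longrightarrow> r \<in> carrier R \<Longrightarrow> ract A x r \<in> carrier A" for x r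
    using assms(1) unfolding right_module_def by blast
  show ?thesis using assms(2,3) ca cr unfolding rmod_hom_def by (auto simp: PiE_iff)
qed

lemma rmod_hom_sgn:
  assumes "right_module R A" "right_module R B" "g \<in> rmod_hom R A B"
  shows "(\<lambda>x\<in>carrier A. sgn_neg B e (g x)) \<in> rmod_hom R A B"
proof (cases "even e")
  case True
  then show ?thesis using assms by (auto simp: rmod_hom_def sgn_neg_def)
next
  case False
  interpret B: abelian_group B using assms by (simp add: right_module_def)
  have cl: "x \<in> carrier A \<Longrightarrow> g x \<in> carrier B" for x by (rule rmod_hom_carrier[OF assms(3)])
  have ca: "x \<in> carrier A \<Longrightarrow> y \<in> carrier A \<Longrightarrow> x \<oplus>\<^bsub>A\<^esub> y \<in> carrier A" for x y
    by (rule rm_add_closed[OF assms(1)])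
  have cr: "x \<in> carrier A \<Longrightarrow> r \<in> carrier R \<Longrightarrow> ract A x r \<in> carrier A" for x r
    using assms(1) unfolding right_module_def by blast
  show ?thesis using False unfolding rmod_hom_def sgn_neg_def
    apply (auto simp: cl ca cr)
     apply (simp add: rmod_hom_add[OF assms(3)] B.minus_add cl)
    apply (simp add: rmod_hom_ract[OF assms(3)] cl ract_neg[OF assms(2)])
    done
qed

lemma homgrp_simps:
  "carrier (homgrp R A N) = rmod_hom R A N"
  "f \<otimes>\<^bsub>homgrp R A N\<^esub> g = (\<lambda>x\<in>carrier A. f x \<oplus>\<^bsub>N\<^esub> g x)"
  "\<one>\<^bsub>homgrp R A N\<^esub> = (\<lambda>x\<in>carrier A. \<zero>\<^bsub>N\<^esub>)"
  by (simp_all add: homgrp_def)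

lemma homgrp_comm_group:
  assumes A: "right_module R A" and N: "right_module R N"
  shows "comm_group (homgrp R A N)"
proof -
  interpret A: abelian_group A using A by (simp add: right_module_def)
  interpret N: abelian_group N using N by (simp add: right_module_def)
  have cr: "x \<in> carrier A \<Longrightarrow> r \<in> carrier R \<Longrightarrow> ract A x r \<in> carrier A" for x r
    using A unfolding right_module_def by blast
  have crN: "x \<in> carrier N \<Longrightarrow> r \<in> carrier R \<Longrightarrow> ract N x r \<in> carrier N" for x r
    using N unfolding right_module_def by blast
  have dN: "x \<in> carrier N \<Longrightarrow> y \<in> carrier N \<Longrightarrow> r \<in> carrier R \<Longrightarrow>
     ract N (x \<oplus>\<^bsub>N\<^esub> y) r = ract N x r \<oplus>\<^bsub>N\<^esub> ract N y r" for x y r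
    using N unfolding right_module_def by blast
  note hc = rmod_hom_carrier rmod_hom_add rmod_hom_ract
  show ?thesis
  proof (rule comm_groupI, goal_cases)
    case (1 x y)
    note 1 = 1[unfolded homgrp_simps]
    then show ?case
      unfolding homgrp_simps rmod_hom_def
    proof (intro CollectI conjI ballI)
      show "(\<lambda>a\<in>carrier A. x a \<oplus>\<^bsub>N\<^esub> y a) \<in> carrier A \<rightarrow>\<^sub>E carrier N"
        using hc(1)[OF 1(1)] hc(1)[OF 1(2)] by auto
    next
      fix a b assume ab: "a \<in> carrier A" "b \<in> carrier A"
      then show "(\<lambda>a\<in>carrier A. x a \<oplus>\<^bsub>N\<^esub> y a) (a \<oplus>\<^bsub>A\<^esub> b) =
         (\<lambda>a\<in>carrier A. x a \<oplus>\<^bsub>N\<^esub> y a) a \<oplus>\<^bsub>N\<^esub> (\<lambda>a\<in>carrier A. x a \<oplus>\<^bsub>N\<^esub> y a) b"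
        using hc[OF 1(1)] hc[OF 1(2)] by (simp add: N.a_ac)
    next
      fix a r assume ar: "a \<in> carrier A" "r \<in> carrier R"
      then show "(\<lambda>a\<in>carrier A. x a \<oplus>\<^bsub>N\<^esub> y a) (ract A a r) =
         ract N ((\<lambda>a\<in>carrier A. x a \<oplus>\<^bsub>N\<^esub> y a) a) r"
        using hc[OF 1(1)] hc[OF 1(2)] cr[OF ar] by (simp add: dN)
    qed
  next
    case 2
    then show ?case by (auto simp: homgrp_simps rmod_hom_def ract_zero[OF N] cr)
  next
    case (3 x y z)
    note 3 = 3[unfolded homgrp_simps]
    then show ?case using hc[OF 3(1)] hc[OF 3(2)] hc[OF 3(3)]
      by (auto simp: homgrp_simps N.a_ac)
  next
    case (4 x y)
    note 4 = 4[unfolded homgrp_simps]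
    then show ?case using hc[OF 4(1)] hc[OF 4(2)]
      by (auto simp: homgrp_simps N.a_ac)
  next
    case (5 x)
    note 5 = 5[unfolded homgrp_simps]
    then show ?case using hc[OF 5(1)] rmod_hom_ext[OF 5(1)[unfolded homgrp_simps]]
      by (auto simp: homgrp_simps intro!: ext)
  next
    case (6 x)
    have xh: "x \<in> rmod_hom R A N" using 6 by (simp add: homgrp_simps)
    have "(\<lambda>a\<in>carrier A. sgn_neg N 1 (x a)) \<in> rmod_hom R A N"
      by (rule rmod_hom_sgn[OF A N xh])
    moreover have "(\<lambda>a\<in>carrier A. sgn_neg N 1 (x a)) \<otimes>\<^bsub>homgrp R A N\<^esub> x = \<one>\<^bsub>homgrp R A N\<^esub>"
      using hc(1)[OF xh] by (auto simp: homgrp_simps sgn_neg_def N.l_neg)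
    ultimately show ?case by (metis homgrp_simps(1))
  qed
qed

lemma homgrp_inv:
  assumes A: "right_module R A" and N: "right_module R N" and f: "f \<in> rmod_hom R A N"
  shows "inv\<^bsub>homgrp R A N\<^esub> f = (\<lambda>x\<in>carrier A. \<ominus>\<^bsub>N\<^esub> f x)"
proof -
  interpret G: comm_group "homgrp R A N" by (rule homgrp_comm_group[OF A N])
  interpret N: abelian_group N using N by (simp add: right_module_def)
  have m: "(\<lambda>a\<in>carrier A. sgn_neg N 1 (f a)) \<in> rmod_hom R A N"
    by (rule rmod_hom_sgn[OF A N f])
  have "(\<lambda>a\<in>carrier A. sgn_neg N 1 (f a)) \<otimes>\<^bsub>homgrp R A N\<^esub> f = \<one>\<^bsub>homgrp R A N\<^esub>"
    using rmod_hom_carrier[OF f] by (auto simp: homgrp_simps sgn_neg_def N.l_neg)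
  then have "inv\<^bsub>homgrp R A N\<^esub> f = (\<lambda>a\<in>carrier A. sgn_neg N 1 (f a))"
    using G.inv_equality m f by (simp add: homgrp_simps)
  then show ?thesis by (simp add: sgn_neg_def)
qed

lemma precomp_hom:
  assumes A: "right_module R A" and B: "right_module R B" and N: "right_module R N"
    and g: "g \<in> rmod_hom R B A"
  shows "(\<lambda>f. \<lambda>x\<in>carrier B. f (g x)) \<in> hom (homgrp R A N) (homgrp R B N)"
proof (rule homI)
  fix f assume "f \<in> carrier (homgrp R A N)"
  then show "(\<lambda>x\<in>carrier B. f (g x)) \<in> carrier (homgrp R B N)"
    using rmod_hom_comp[OF B g] by (simp add: homgrp_simps)
next
  fix f h assume "f \<in> carrier (homgrp R A N)" "h \<in> carrier (homgrp R A N)"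
  then show "(\<lambda>x\<in>carrier B. (f \<otimes>\<^bsub>homgrp R A N\<^esub> h) (g x)) =
    (\<lambda>x\<in>carrier B. f (g x)) \<otimes>\<^bsub>homgrp R B N\<^esub> (\<lambda>x\<in>carrier B. h (g x))"
    using rmod_hom_carrier[OF g] by (auto simp: homgrp_simps)
qed

lemma r_coset_upd: "r_coset (G\<lparr>carrier := S\<rparr>) H a = r_coset G H a"
  by (simp add: r_coset_def)

lemma cx_struct:
  assumes cg: "\<And>j. comm_group (C j)" and hm: "\<And>j. \<delta> j \<in> hom (C j) (C (Suc j))"
    and dd: "\<And>j f. f \<in> carrier (C j) \<Longrightarrow> \<delta> (Suc j) (\<delta> j f) = \<one>\<^bsub>C (Suc (Suc j))\<^esub>"
  shows "comm_group ((C j)\<lparr>carrier := cocyc C \<delta> j\<rparr>)"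
    and "subgroup (cobd C \<delta> j) ((C j)\<lparr>carrier := cocyc C \<delta> j\<rparr>)"
    and "group (coh C \<delta> j)"
proof -
  interpret G: comm_group "C j" by (rule cg)
  interpret h: group_hom "C j" "C (Suc j)" "\<delta> j"
    using cg hm by (simp add: group_hom_def group_hom_axioms_def comm_group.axioms(2))
  have kz: "cocyc C \<delta> j = kernel (C j) (C (Suc j)) (\<delta> j)"
    by (simp add: cocyc_def kernel_def)
  have sZ: "subgroup (cocyc C \<delta> j) (C j)" unfolding kz by (rule h.subgroup_kernel)
  have sB: "subgroup (cobd C \<delta> j) (C j)"
  proof (cases j)
    case 0
    then show ?thesis using G.triv_subgroup by (simp add: cobd_def)
  next
    case (Suc k)
    interpret h2: group_hom "C k" "C (Suc k)" "\<delta> k"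
      using cg hm by (simp add: group_hom_def group_hom_axioms_def comm_group.axioms(2))
    show ?thesis using h2.img_is_subgroup Suc by (simp add: cobd_def)
  qed
  have BZ: "cobd C \<delta> j \<subseteq> cocyc C \<delta> j"
  proof (cases j)
    case 0
    then show ?thesis using subgroup.one_closed[OF sZ] by (simp add: cobd_def)
  next
    case (Suc k)
    have "\<delta> k f \<in> cocyc C \<delta> j" if "f \<in> carrier (C k)" for f
    proof -
      have "\<delta> k f \<in> carrier (C (Suc k))" by (rule hom_in_carrier[OF hm that])
      moreover have "\<delta> (Suc k) (\<delta> k f) = \<one>\<^bsub>C (Suc (Suc k))\<^esub>" by (rule dd[OF that])
      ultimately show ?thesis unfolding cocyc_def Suc by simp
    qed
    then show ?thesis using Suc by (auto simp: cobd_def)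
  qed
  have gZ: "group ((C j)\<lparr>carrier := cocyc C \<delta> j\<rparr>)"
    by (rule subgroup.subgroup_is_group[OF sZ G.is_group])
  show cZ: "comm_group ((C j)\<lparr>carrier := cocyc C \<delta> j\<rparr>)"
  proof (rule group.group_comm_groupI[OF gZ])
    fix x y assume "x \<in> carrier ((C j)\<lparr>carrier := cocyc C \<delta> j\<rparr>)" "y \<in> carrier ((C j)\<lparr>carrier := cocyc C \<delta> j\<rparr>)"
    then show "x \<otimes>\<^bsub>(C j)\<lparr>carrier := cocyc C \<delta> j\<rparr>\<^esub> y = y \<otimes>\<^bsub>(C j)\<lparr>carrier := cocyc C \<delta> j\<rparr>\<^esub> x"
      using subgroup.mem_carrier[OF sZ] G.m_comm by simp
  qed
  show sBZ: "subgroup (cobd C \<delta> j) ((C j)\<lparr>carrier := cocyc C \<delta> j\<rparr>)"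
    using G.subgroup_incl[OF sB sZ BZ] .
  have "cobd C \<delta> j \<lhd> (C j)\<lparr>carrier := cocyc C \<delta> j\<rparr>"
    by (rule comm_group.subgroup_imp_normal[OF cZ sBZ])
  then show "group (coh C \<delta> j)"
    unfolding coh_def by (rule normal.factorgroup_is_group)
qed

lemma coh_carrier:
  "carrier (coh C \<delta> j) = {r_coset (C j) (cobd C \<delta> j) a | a. a \<in> cocyc C \<delta> j}"
  by (auto simp: coh_def FactGroup_def RCOSETS_def r_coset_upd)

lemma coh_one: "\<one>\<^bsub>coh C \<delta> j\<^esub> = cobd C \<delta> j"
  by (simp add: coh_def FactGroup_def)

lemma coh_repr:
  assumes cg: "\<And>j. comm_group (C j)" and hm: "\<And>j. \<delta> j \<in> hom (C j) (C (Suc j))"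
    and dd: "\<And>j f. f \<in> carrier (C j) \<Longrightarrow> \<delta> (Suc j) (\<delta> j f) = \<one>\<^bsub>C (Suc (Suc j))\<^esub>"
    and Y: "Y \<in> carrier (coh C \<delta> j)"
  shows "r_coset (C j) (cobd C \<delta> j) (SOME x. x \<in> Y) = Y"
proof -
  let ?G = "(C j)\<lparr>carrier := cocyc C \<delta> j\<rparr>"
  interpret G: comm_group ?G by (rule cx_struct(1)[where C=C and \<delta>=\<delta> and j=j, OF cg hm dd])
  have sB: "subgroup (cobd C \<delta> j) ?G" by (rule cx_struct(2)[where C=C and \<delta>=\<delta> and j=j, OF cg hm dd])
  obtain a where a: "a \<in> cocyc C \<delta> j" "Y = r_coset ?G (cobd C \<delta> j) a"
    using Y by (auto simp: coh_carrier r_coset_upd)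
  have "a \<in> Y" using G.rcos_self[OF _ sB] a by simp
  then have "(SOME x. x \<in> Y) \<in> Y" by (rule someI)
  then have "r_coset ?G (cobd C \<delta> j) (SOME x. x \<in> Y) = Y"
    using G.repr_independence[OF _ _ sB] a by simp
  then show ?thesis by (simp add: r_coset_upd)
qed

lemma iso_restrict_id:
  assumes "group G" shows "(\<lambda>x\<in>carrier G. x) \<in> iso G G"
proof -
  interpret group G by fact
  show ?thesis unfolding iso_def hom_def bij_betw_def inj_on_def
    by (auto simp: image_def)
qed

lemma sgn_neg_zero:
  assumes "abelian_group B" shows "sgn_neg B e \<zero>\<^bsub>B\<^esub> = \<zero>\<^bsub>B\<^esub>"
proof -
  interpret abelian_group B by fact
  show ?thesis using add.inv_one by (simp add: sgn_neg_def)
qed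

lemma sgn_neg_closed:
  assumes "abelian_group B" "y \<in> carrier B" shows "sgn_neg B e y \<in> carrier B"
proof -
  interpret abelian_group B by fact
  show ?thesis using assms(2) by (simp add: sgn_neg_def)
qed

lemma sgn_neg_sgn_neg:
  assumes "abelian_group B" "y \<in> carrier B"
  shows "sgn_neg B e1 (sgn_neg B e2 y) = sgn_neg B (e1 + e2) y"
proof -
  interpret abelian_group B by fact
  show ?thesis using assms(2) by (simp add: sgn_neg_def minus_minus)
qed

lemma rmod_hom_sgn_comm:
  assumes "right_module R A" "right_module R B" "g \<in> rmod_hom R A B" "y \<in> carrier A"
  shows "g (sgn_neg A e y) = sgn_neg B e (g y)"
  using rmod_hom_neg[OF assms] by (simp add: sgn_neg_def)

locale LS =
  fixes R :: "'g ring" and N :: "('g, 'b) rmodule" and M :: "('g, 'm) rmodule"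
    and P :: "nat \<Rightarrow> ('g, 'p) rmodule" and d :: "nat \<Rightarrow> 'p \<Rightarrow> 'p"
    and \<alpha> :: "'p \<Rightarrow> 'm" and \<beta> :: "'m \<Rightarrow> 'p" and n :: nat
  assumes modM: "right_module R M" and modN: "right_module R N" and n1: "1 \<le> n"
    and modP: "\<And>i. i < n \<Longrightarrow> right_module R (P i)"
    and homd: "\<And>i. 1 \<le> i \<Longrightarrow> i < n \<Longrightarrow> d i \<in> rmod_hom R (P i) (P (i - 1))"
    and hom\<alpha>: "\<alpha> \<in> rmod_hom R (P 0) M"
    and hom\<beta>: "\<beta> \<in> rmod_hom R M (P (n - 1))"
    and ex0: "\<And>x. n = 1 \<Longrightarrow> x \<in> carrier M \<Longrightarrow> \<alpha> (\<beta> x) = \<zero>\<^bsub>M\<^esub>"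
    and ex0': "\<And>x. n \<noteq> 1 \<Longrightarrow> x \<in> carrier (P 1) \<Longrightarrow> \<alpha> (d 1 x) = \<zero>\<^bsub>M\<^esub>"
    and exi: "\<And>i x. 1 \<le> i \<Longrightarrow> Suc i < n \<Longrightarrow> x \<in> carrier (P (Suc i)) \<Longrightarrow>
                d i (d (Suc i) x) = \<zero>\<^bsub>P (i - 1)\<^esub>"
    and exn: "\<And>x. 2 \<le> n \<Longrightarrow> x \<in> carrier M \<Longrightarrow> d (n - 1) (\<beta> x) = \<zero>\<^bsub>P (n - 1 - 1)\<^esub>"
begin

definition "Dm i = (if i \<noteq> 0 then d i else d0fun P \<alpha> \<beta>)"
definition "pr i = (if i = 0 then n - 1 else i - 1)"
definition "sg j = (if Suc j mod n \<noteq> 0 then (Suc j div n) * n else (Suc j div n - 1) * n)"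

lemma n0: "0 < n" using n1 by simp

lemma Pmod: "right_module R (P (j mod n))"
  using modP n0 by simp

lemma mod_pr: "j mod n = pr (Suc j mod n)"
  using n0 by (auto simp: pr_def mod_Suc)

lemma pr_lt: "i < n \<Longrightarrow> pr i < n"
  using n0 by (auto simp: pr_def)

lemma d0_hom: "d0fun P \<alpha> \<beta> \<in> rmod_hom R (P 0) (P (n - 1))"
  unfolding d0fun_def by (rule rmod_hom_comp[OF modP[OF n0] hom\<alpha> hom\<beta>])

lemma Dm_hom: "i < n \<Longrightarrow> Dm i \<in> rmod_hom R (P i) (P (pr i))"
  using homd d0_hom by (auto simp: Dm_def pr_def)

lemma dP_eq: "dP n P d (d0fun P \<alpha> \<beta>) j =
   (\<lambda>x\<in>carrier (P (Suc j mod n)). sgn_neg (P (j mod n)) (sg j) (Dm (Suc j mod n) x))"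
  using mod_pr[of j] by (auto simp: dP_def Let_def Dm_def sg_def pr_def)

lemma dP_hom: "dP n P d (d0fun P \<alpha> \<beta>) j \<in> rmod_hom R (P (Suc j mod n)) (P (j mod n))"
proof -
  have m: "right_module R (P (Suc j mod n))" by (rule Pmod)
  have h: "Dm (Suc j mod n) \<in> rmod_hom R (P (Suc j mod n)) (P (j mod n))"
    using Dm_hom[of "Suc j mod n"] n0 mod_pr[of j] by simp
  show ?thesis unfolding dP_eq by (rule rmod_hom_sgn[OF m Pmod h])
qed

lemma DD:
  assumes b: "b < n" and x: "x \<in> carrier (P b)"
  shows "Dm (pr b) (Dm b x) = \<zero>\<^bsub>P (pr (pr b))\<^esub>"
proof -
  have agM: "abelian_group M" using modM by (simp add: right_module_def)
  have \<alpha>x: "y \<in> carrier (P 0) \<Longrightarrow> \<alpha> y \<in> carrier M" for y using rmod_hom_carrier[OF hom\<alpha>] .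
  have \<beta>0: "\<beta> \<zero>\<^bsub>M\<^esub> = \<zero>\<^bsub>P (n - 1)\<^esub>"
    by (rule rmod_hom_zero[OF modM modP hom\<beta>]) (use n0 in simp)
  show ?thesis
  proof (cases "b = 0")
    case True
    note b0 = True
    show ?thesis
    proof (cases "n = 1")
      case True
      have p0: "pr 0 = 0" unfolding pr_def using True by simp
      have "Dm 0 (Dm 0 x) = \<zero>\<^bsub>P 0\<^esub>" using True b0 x \<alpha>x ex0 \<beta>0 rmod_hom_carrier[OF hom\<beta>]
        by (simp add: Dm_def d0fun_def)
      then show ?thesis using b0 p0 by simp
    next
      case False
      then have "2 \<le> n" using n1 by simp
      then show ?thesis using b0 x \<alpha>x exn False
        by (simp add: Dm_def pr_def d0fun_def)
    qed
  next
    case False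
    note bn0 = False
    show ?thesis
    proof (cases "b = 1")
      case True
      then have "n \<noteq> 1" using b by simp
      moreover have "d 1 x \<in> carrier (P 0)" using rmod_hom_carrier[OF homd[of 1]] x True b by simp
      ultimately show ?thesis using True x ex0' \<beta>0
        by (simp add: Dm_def pr_def d0fun_def)
    next
      case False
      then obtain i where i: "b = Suc i" "1 \<le> i" using bn0 by (cases b) auto
      then show ?thesis using exi[of i x] b x by (simp add: Dm_def pr_def)
    qed
  qed
qed

abbreviation "d0 \<equiv> d0fun P \<alpha> \<beta>"
abbreviation "C \<equiv> HomPc R N n P"
abbreviation "\<delta> \<equiv> delPc n P d d0"

lemma agP: "abelian_group (P (j mod n))" using Pmod[of j] by (simp add: right_module_def)

lemma dP_closed: "x \<in> carrier (P (Suc j mod n)) \<Longrightarrow> dP n P d d0 j x \<in> carrier (P (j mod n))"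
  using rmod_hom_carrier[OF dP_hom] .

lemma dPdP:
  assumes x: "x \<in> carrier (P (Suc (Suc j) mod n))"
  shows "dP n P d d0 j (dP n P d d0 (Suc j) x) = \<zero>\<^bsub>P (j mod n)\<^esub>"
proof -
  define b where "b = Suc (Suc j) mod n"
  define a where "a = Suc j mod n"
  have ab: "a = pr b" using mod_pr[of "Suc j"] by (simp add: a_def b_def)
  have ja: "j mod n = pr a" using mod_pr[of j] by (simp add: a_def)
  have bn: "b < n" "a < n" using n0 by (auto simp: a_def b_def)
  have xb: "x \<in> carrier (P b)" using x by (simp add: b_def)
  have Dbx: "Dm b x \<in> carrier (P a)" using rmod_hom_carrier[OF Dm_hom[OF bn(1)] xb] ab by simp
  have ma: "right_module R (P a)" using modP bn by simp
  have mpa: "right_module R (P (pr a))" using modP pr_lt bn by simp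
  have h1: "dP n P d d0 (Suc j) x = sgn_neg (P a) (sg (Suc j)) (Dm b x)"
    using xb by (simp add: dP_eq a_def b_def mod_pr[of "Suc j", symmetric])
  have h2: "dP n P d d0 (Suc j) x \<in> carrier (P a)"
    using dP_closed[where j="Suc j" and x=x] x by (simp add: a_def)
  have "dP n P d d0 j (dP n P d d0 (Suc j) x) = sgn_neg (P (pr a)) (sg j) (Dm a (dP n P d d0 (Suc j) x))"
    using h2 ja by (simp add: dP_eq a_def)
  also have "Dm a (dP n P d d0 (Suc j) x) = sgn_neg (P (pr a)) (sg (Suc j)) (Dm a (Dm b x))"
    unfolding h1 by (rule rmod_hom_sgn_comm[OF ma mpa Dm_hom[OF bn(2)] Dbx])
  also have "Dm a (Dm b x) = \<zero>\<^bsub>P (pr a)\<^esub>" using DD[OF bn(1) xb] ab by simp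
  finally show ?thesis
    using sgn_neg_zero[of "P (pr a)"] mpa ja by (simp add: right_module_def)
qed

lemma C_cg: "comm_group (C j)"
  unfolding HomPc_def by (rule homgrp_comm_group[OF Pmod modN])

lemma delta_eq: "\<delta> j = (\<lambda>f. \<lambda>x\<in>carrier (P (Suc j mod n)). f (dP n P d d0 j x))"
  by (simp add: fun_eq_iff delPc_def)

lemma delta_hom: "\<delta> j \<in> hom (C j) (C (Suc j))"
  unfolding delta_eq HomPc_def by (rule precomp_hom[OF Pmod Pmod modN dP_hom])

lemma delta_dd: "f \<in> carrier (C j) \<Longrightarrow> \<delta> (Suc j) (\<delta> j f) = \<one>\<^bsub>C (Suc (Suc j))\<^esub>"
proof -
  assume f: "f \<in> carrier (C j)"
  then have fh: "f \<in> rmod_hom R (P (j mod n)) N" by (simp add: HomPc_def homgrp_simps)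
  have "f \<zero>\<^bsub>P (j mod n)\<^esub> = \<zero>\<^bsub>N\<^esub>" by (rule rmod_hom_zero[OF Pmod modN fh])
  then show ?thesis using dPdP dP_closed[where j="Suc j"]
    by (auto simp: delPc_def HomPc_def homgrp_simps intro!: ext)
qed

lemma sg_shift: "sg (j + n) = n + sg j"
proof -
  have m: "Suc (j + n) mod n = Suc j mod n"
    by (metis add_Suc mod_add_self2)
  have dv: "Suc (j + n) div n = Suc (Suc j div n)"
  proof -
    have "Suc (j + n) div n = (Suc j + n) div n" by simp
    also have "\<dots> = Suc j div n + 1" using div_add_self2[of n "Suc j"] n0 by simp
    finally show ?thesis by simp
  qed
  show ?thesis
  proof (cases "Suc j mod n = 0")
    case True
    have "Suc j div n * n = Suc j" using True div_mult_mod_eq[of "Suc j" n] by simp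
    then have "Suc j div n \<noteq> 0" by (metis mult_0 nat.simps(3))
    then obtain l where l: "Suc j div n = Suc l" by (cases "Suc j div n") auto
    show ?thesis unfolding sg_def using True m dv l by simp
  next
    case False
    then show ?thesis unfolding sg_def using m dv by simp
  qed
qed

lemma dP_shift:
  assumes x: "x \<in> carrier (P (Suc j mod n))"
  shows "dP n P d d0 (j + n) x = sgn_neg (P (j mod n)) n (dP n P d d0 j x)"
proof -
  have m: "Suc (j + n) mod n = Suc j mod n" by (metis add_Suc mod_add_self2)
  have h: "Dm (Suc j mod n) \<in> rmod_hom R (P (Suc j mod n)) (P (j mod n))"
    using Dm_hom[of "Suc j mod n"] n0 mod_pr[of j] by simp
  have y: "Dm (Suc j mod n) x \<in> carrier (P (j mod n))" by (rule rmod_hom_carrier[OF h x])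
  show ?thesis using x m sg_shift[of j] sgn_neg_sgn_neg[OF agP y]
    by (simp add: dP_eq)
qed

lemma C_shift: "C (j + n) = C j"
  by (simp add: HomPc_def)

lemma delta_shift:
  assumes f: "f \<in> carrier (C j)"
  shows "\<delta> (j + n) f = (if even n then \<delta> j f else inv\<^bsub>C (Suc j)\<^esub> (\<delta> j f))"
proof -
  have fh: "f \<in> rmod_hom R (P (j mod n)) N" using f by (simp add: HomPc_def homgrp_simps)
  have m: "Suc (j + n) mod n = Suc j mod n" by (metis add_Suc mod_add_self2)
  have e1: "\<delta> (j + n) f = (\<lambda>x\<in>carrier (P (Suc j mod n)). sgn_neg N n (f (dP n P d d0 j x)))"
    using m dP_shift rmod_hom_sgn_comm[OF Pmod modN fh dP_closed]
    by (auto simp: delPc_def intro!: ext)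
  have dh: "\<delta> j f \<in> rmod_hom R (P (Suc j mod n)) N"
    using hom_in_carrier[OF delta_hom f] by (simp add: HomPc_def homgrp_simps)
  show ?thesis
  proof (cases "even n")
    case True
    then show ?thesis using e1 by (simp add: sgn_neg_def delPc_def)
  next
    case False
    have "inv\<^bsub>C (Suc j)\<^esub> (\<delta> j f) = (\<lambda>x\<in>carrier (P (Suc j mod n)). \<ominus>\<^bsub>N\<^esub> (\<delta> j f) x)"
      unfolding HomPc_def by (rule homgrp_inv[OF Pmod modN dh])
    then show ?thesis using e1 False by (auto simp: sgn_neg_def delPc_def intro!: ext)
  qed
qed

lemma cocyc_shift: "cocyc C \<delta> (j + n) = cocyc C \<delta> j"
proof -
  interpret G: comm_group "C (Suc j)" by (rule C_cg)
  have hc: "f \<in> carrier (C j) \<Longrightarrow> \<delta> j f \<in> carrier (C (Suc j))" for f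
    using hom_in_carrier[OF delta_hom] .
  have CS: "C (Suc (j + n)) = C (Suc j)" using C_shift[of "Suc j"] by simp
  have "\<forall>f\<in>carrier (C j). (\<delta> (j + n) f = \<one>\<^bsub>C (Suc j)\<^esub>) = (\<delta> j f = \<one>\<^bsub>C (Suc j)\<^esub>)"
  proof
    fix f assume f: "f \<in> carrier (C j)"
    show "(\<delta> (j + n) f = \<one>\<^bsub>C (Suc j)\<^esub>) = (\<delta> j f = \<one>\<^bsub>C (Suc j)\<^esub>)"
      using delta_shift[OF f] G.inv_eq_1_iff[OF hc[OF f]] by simp
  qed
  then show ?thesis unfolding cocyc_def C_shift CS by blast
qed

lemma cobd_shift:
  assumes i: "0 < i" shows "cobd C \<delta> (i + n) = cobd C \<delta> i"
proof -
  obtain k where k: "i = Suc k" using i by (cases i) auto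
  interpret G: comm_group "C k" by (rule C_cg)
  interpret h: group_hom "C k" "C (Suc k)" "\<delta> k"
    using C_cg delta_hom by (simp add: group_hom_def group_hom_axioms_def comm_group.axioms(2))
  have e: "i + n - 1 = k + n" "i - 1 = k" using k by auto
  have "\<delta> (k + n) ` carrier (C (k + n)) = \<delta> k ` carrier (C k)"
  proof (cases "even n")
    case True
    then show ?thesis unfolding C_shift using delta_shift by (auto simp: image_def)
  next
    case False
    have "\<delta> (k + n) ` carrier (C k) = (\<lambda>f. \<delta> k (inv\<^bsub>C k\<^esub> f)) ` carrier (C k)"
      using delta_shift False h.hom_inv by (auto simp: image_def)
    also have "\<dots> = \<delta> k ` carrier (C k)"
    proof -
      have "(\<lambda>f. inv\<^bsub>C k\<^esub> f) ` carrier (C k) = carrier (C k)"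
        using G.inv_closed G.inv_inv by (auto simp: image_def) (metis G.inv_closed G.inv_inv)
      then show ?thesis by (metis image_image)
    qed
    finally show ?thesis unfolding C_shift .
  qed
  then show ?thesis using i k by (simp add: cobd_def e)
qed

lemma coh_shift: "0 < i \<Longrightarrow> coh C \<delta> (i + n) = coh C \<delta> i"
  unfolding coh_def using cocyc_shift[of i] cobd_shift[of i] C_shift[of i] by simp

end


theorem lemma3p7:
  fixes K :: "'k ring" and R :: "'g ring" and \<phi> :: "'k \<Rightarrow> 'g"
    and M :: "('g, 'm) rmodule" and N :: "('g, 'b) rmodule"
    and P :: "nat \<Rightarrow> ('g, 'p) rmodule" and d :: "nat \<Rightarrow> 'p \<Rightarrow> 'p"
    and \<alpha> :: "'p \<Rightarrow> 'm" and \<beta> :: "'m \<Rightarrow> 'p" and n :: nat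
  assumes alg: "k_algebra K R \<phi>"
    and modM: "right_module R M" and modN: "right_module R N"
    and n1: "1 \<le> n"
    and modP: "\<forall>i<n. right_module R (P i) \<and> fg_projective R (P i)"
    and homd: "\<forall>i. 1 \<le> i \<and> i < n \<longrightarrow> d i \<in> rmod_hom R (P i) (P (i - 1))"
    and hom\<alpha>: "\<alpha> \<in> rmod_hom R (P 0) M"
    and hom\<beta>: "\<beta> \<in> rmod_hom R M (P (n - 1))"
    and ex_M: "inj_on \<beta> (carrier M)"
    and ex_P0: "{x \<in> carrier (P 0). \<alpha> x = \<zero>\<^bsub>M\<^esub>} =
                 (if n = 1 then \<beta> ` carrier M else d 1 ` carrier (P 1))"
    and ex_Pi: "\<forall>i. 1 \<le> i \<and> i < n \<longrightarrow>
                 {x \<in> carrier (P i). d i x = \<zero>\<^bsub>P (i - 1)\<^esub>} =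
                 (if i = n - 1 then \<beta> ` carrier M else d (Suc i) ` carrier (P (Suc i)))"
    and ex_M': "\<alpha> ` carrier (P 0) = carrier M"
  shows
    "let d0 = d0fun P \<alpha> \<beta>;
         C = HomPc R N n P; \<delta> = delPc n P d d0;
         Q = HomQc R N n P; \<delta>Q = delQc R N n P d d0;
         \<pi> = piQ R N n P;
         Z = cocyc Q \<delta>Q n;
         h = (\<lambda>z. Hmap Q \<delta>Q C \<delta> \<pi> n (r_coset (Q n) (cobd Q \<delta>Q n) z))
     in h ` Z = carrier (coh C \<delta> n)
      \<and> {z \<in> Z. h z = \<one>\<^bsub>coh C \<delta> n\<^esub>} =
          (\<lambda>f. \<lambda>x\<in>carrier (P 0). f (d0 x)) ` rmod_hom R (P (n - 1)) N
      \<and> (\<forall>i>0. Hmap Q \<delta>Q C \<delta> \<pi> (i + n) \<in> iso (coh C \<delta> i) (coh C \<delta> (i + n)))"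
proof -
  have modP': "\<And>i. i < n \<Longrightarrow> right_module R (P i)" using modP by blast
  have homd': "\<And>i. 1 \<le> i \<Longrightarrow> i < n \<Longrightarrow> d i \<in> rmod_hom R (P i) (P (i - 1))" using homd by blast
  interpret L: LS R N M P d \<alpha> \<beta> n
  proof
    fix x assume "n = 1" "x \<in> carrier M"
    then have "\<beta> x \<in> {x \<in> carrier (P 0). \<alpha> x = \<zero>\<^bsub>M\<^esub>}" using ex_P0 by simp
    then show "\<alpha> (\<beta> x) = \<zero>\<^bsub>M\<^esub>" by simp
  next
    fix x assume "n \<noteq> 1" "x \<in> carrier (P 1)"
    then have "d 1 x \<in> {x \<in> carrier (P 0). \<alpha> x = \<zero>\<^bsub>M\<^esub>}" using ex_P0 by simp
    then show "\<alpha> (d 1 x) = \<zero>\<^bsub>M\<^esub>" by simp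
  next
    fix i x assume a: "1 \<le> i" "Suc i < n" "x \<in> carrier (P (Suc i))"
    then have "d (Suc i) x \<in> {x \<in> carrier (P i). d i x = \<zero>\<^bsub>P (i - 1)\<^esub>}" using ex_Pi[rule_format, of i] by simp
    then show "d i (d (Suc i) x) = \<zero>\<^bsub>P (i - 1)\<^esub>" by simp
  next
    fix x assume a: "2 \<le> n" "x \<in> carrier M"
    then have "\<beta> x \<in> {y \<in> carrier (P (n - 1)). d (n - 1) y = \<zero>\<^bsub>P (n - 1 - 1)\<^esub>}"
      using ex_Pi[rule_format, of "n - 1"] by simp
    then show "d (n - 1) (\<beta> x) = \<zero>\<^bsub>P (n - 1 - 1)\<^esub>" by simp
  qed (use modM modN n1 modP' homd' hom\<alpha> hom\<beta> in auto)
  define d0 where "d0 = d0fun P \<alpha> \<beta>"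
  define C where "C = HomPc R N n P"
  define \<delta> :: "nat \<Rightarrow> ('p \<Rightarrow> 'b) \<Rightarrow> 'p \<Rightarrow> 'b" where "\<delta> = delPc n P d d0"
  define Q where "Q = HomQc R N n P"
  define \<delta>Q where "\<delta>Q = delQc R N n P d d0"
  define \<pi> where "\<pi> = piQ R N n P"
  define Z where "Z = cocyc Q \<delta>Q n"
  define h where "h = (\<lambda>z. Hmap Q \<delta>Q C \<delta> \<pi> n (r_coset (Q n) (cobd Q \<delta>Q n) z))"
  note cg = L.C_cg[folded C_def]
  note hm = L.delta_hom[folded C_def, folded d0_def, folded \<delta>_def]
  note dd = L.delta_dd[folded C_def, folded d0_def, folded \<delta>_def]
  have QC: "\<And>j. n \<le> j \<Longrightarrow> Q j = C j" by (simp add: Q_def C_def HomQc_def)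
  have dQ: "\<And>j. n \<le> j \<Longrightarrow> \<delta>Q j = \<delta> j" by (simp add: \<delta>Q_def \<delta>_def delQc_def fun_eq_iff)
  have ZC: "Z = cocyc C \<delta> n" unfolding Z_def cocyc_def using QC dQ by simp
  have cobdQ: "cobd Q \<delta>Q n = {\<one>\<^bsub>C n\<^esub>}"
  proof -
    have "n \<noteq> 0" "\<not> n \<le> n - 1" "Suc (n - 1) = n" using n1 by auto
    then show ?thesis by (simp add: cobd_def Q_def \<delta>Q_def HomQc_def delQc_def C_def)
  qed
  have hz: "h z = r_coset (C n) (cobd C \<delta> n) z" if z: "z \<in> Z" for z
  proof -
    interpret G: comm_group "C n" by (rule cg)
    have zc: "z \<in> carrier (C n)" using z ZC by (simp add: cocyc_def)
    have "r_coset (Q n) (cobd Q \<delta>Q n) z = {z}"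
      using zc QC[of n] by (simp add: cobdQ r_coset_def)
    moreover have "{z} \<in> carrier (coh Q \<delta>Q n)"
    proof -
      have "{z} = r_coset (Q n) (cobd Q \<delta>Q n) z"
        using zc QC[of n] by (simp add: cobdQ r_coset_def)
      then show ?thesis using z unfolding coh_carrier Z_def by blast
    qed
    ultimately show ?thesis by (simp add: h_def Hmap_def \<pi>_def piQ_def)
  qed
  have part1: "h ` Z = carrier (coh C \<delta> n)"
    unfolding coh_carrier using hz ZC by (auto simp: image_def)
  have cobd_eq: "cobd C \<delta> n = (\<lambda>f. \<lambda>x\<in>carrier (P 0). f (d0 x)) ` rmod_hom R (P (n - 1)) N"
  proof -
    have e: "n \<noteq> 0" "Suc (n - 1) = n" "(n - 1) mod n = n - 1" using n1 by auto
    have "\<delta> (n - 1) f = (\<lambda>x\<in>carrier (P 0). f (d0 x))" for f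
      unfolding \<delta>_def delPc_def dP_def using e by (auto simp: Let_def sgn_neg_def intro!: ext)
    then show ?thesis using e by (simp add: cobd_def C_def HomPc_def homgrp_simps)
  qed
  have part2: "{z \<in> Z. h z = \<one>\<^bsub>coh C \<delta> n\<^esub>} = cobd C \<delta> n"
  proof -
    let ?G = "(C n)\<lparr>carrier := cocyc C \<delta> n\<rparr>"
    interpret G: comm_group ?G by (rule cx_struct(1)[where C=C and \<delta>=\<delta> and j=n, OF cg hm dd])
    have sB: "subgroup (cobd C \<delta> n) ?G" by (rule cx_struct(2)[where C=C and \<delta>=\<delta> and j=n, OF cg hm dd])
    have BZ: "cobd C \<delta> n \<subseteq> Z" using subgroup.subset[OF sB] ZC by simp
    have "z \<in> Z \<Longrightarrow> (r_coset ?G (cobd C \<delta> n) z = cobd C \<delta> n) = (z \<in> cobd C \<delta> n)" for z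
      using G.coset_join1[of "cobd C \<delta> n" z] G.coset_join2[of z "cobd C \<delta> n"] sB ZC by auto
    then have eq: "z \<in> Z \<Longrightarrow> (h z = cobd C \<delta> n) = (z \<in> cobd C \<delta> n)" for z
      using hz by (simp add: r_coset_upd)
    show ?thesis unfolding coh_one using BZ eq by blast
  qed
  have part3: "Hmap Q \<delta>Q C \<delta> \<pi> (i + n) \<in> iso (coh C \<delta> i) (coh C \<delta> (i + n))" if i: "0 < i" for i
  proof -
    have e: "n \<le> i + n" "n \<le> Suc (i + n)" "n \<le> i + n - 1" "i + n \<noteq> 0" using i by auto
    have cQ: "coh Q \<delta>Q (i + n) = coh C \<delta> (i + n)"
      unfolding coh_def cocyc_def cobd_def using QC dQ e i by simp
    have "Hmap Q \<delta>Q C \<delta> \<pi> (i + n) = (\<lambda>Y\<in>carrier (coh C \<delta> (i + n)). Y)"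
      unfolding Hmap_def cQ \<pi>_def piQ_def
      using coh_repr[where C=C and \<delta>=\<delta>, OF cg hm dd] e by (auto intro!: ext)
    moreover have "coh C \<delta> (i + n) = coh C \<delta> i" using L.coh_shift[OF i] by (simp add: C_def \<delta>_def d0_def)
    moreover have "group (coh C \<delta> i)" by (rule cx_struct(3)[where C=C and \<delta>=\<delta> and j=i, OF cg hm dd])
    ultimately show ?thesis using iso_restrict_id by metis
  qed
  show ?thesis
    unfolding Let_def
    using part1 part2 part3 cobd_eq
    unfolding d0_def C_def \<delta>_def Q_def \<delta>Q_def \<pi>_def Z_def h_def
    by simp
qed

end
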